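(* Let $d$ be an odd integer. Then $U=\{(0,0)\}\cup\{(e,f)\in\mathcal{B}\mid f=d\}$ is maximal avoidable.
   Context: The bicyclic inverse semigroup is $\mathcal{B}=\{(a,b)\in\mathbb{Z}\times\mathbb{Z}\mid a\ge 0,\ a+b\ge 0\}$ with multiplication $(a,b)(c,d)=(\max\{c+d,a\}-d,\ b+d)$. A subset $U\subseteq\mathcal{B}$ is called avoidable if $\mathcal{B}$ can be partitioned into two subsets $A$ and $B$ such that no element of $U$ can be written as a product $xy$ of two distinct elements $x\neq y$ both in $A$, or both in $B$. A maximal avoidable set is an avoidable set not properly contained in any other avoidable subset of $\mathcal{B}$. *)

theory Defs
  imports Main
begin

definition bicyclic :: "(int \<times> int) set" where
  "bicyclic = {(a, b). a \<ge> 0 \<and> a + b \<ge> 0}"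

definition bmult :: "int \<times> int \<Rightarrow> int \<times> int \<Rightarrow> int \<times> int" where
  "bmult x y = (case x of (a, b) \<Rightarrow> case y of (c, d) \<Rightarrow> (max (c + d) a - d, b + d))"

definition avoidable :: "(int \<times> int) set \<Rightarrow> bool" where
  "avoidable U \<longleftrightarrow> U \<subseteq> bicyclic \<and>
     (\<exists>A B. A \<union> B = bicyclic \<and> A \<inter> B = {} \<and>
        (\<forall>x\<in>A. \<forall>y\<in>A. x \<noteq> y \<longrightarrow> bmult x y \<notin> U) \<and>
        (\<forall>x\<in>B. \<forall>y\<in>B. x \<noteq> y \<longrightarrow> bmult x y \<notin> U))"

definition maximal_avoidable :: "(int \<times> int) set \<Rightarrow> bool" where
  "maximal_avoidable U \<longleftrightarrow> avoidable U \<and>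
     (\<forall>V. avoidable V \<and> U \<subseteq> V \<longrightarrow> V = U)"

end

theory Submission
  imports Defs
begin

lemma bmult_simp: "bmult (a,b) (c,e) = (max (c+e) a - e, b + e)" by (simp add: bmult_def)

lemma bmult_closed: "x \<in> bicyclic \<Longrightarrow> y \<in> bicyclic \<Longrightarrow> bmult x y \<in> bicyclic"
  by (cases x; cases y) (auto simp: bicyclic_def bmult_def max_def)

lemma par_lemma:
  fixes m e :: int assumes "m>0" "e>0"
  shows "even ((2*e+2*m) div (2*m)) \<noteq> even ((\<bar>2*e - m\<bar> + m) div (2*m))"
proof -
  have 1: "(2*e+2*m) div (2*m) = (2*e) div (2*m) + 1" using assms div_add_self2[of "2*m" "2*e"] by linarith
  show ?thesis
  proof (cases "2*e \<ge> m")
    case True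
    then have "\<bar>2*e - m\<bar> + m = 2*e" by simp
    then show ?thesis using 1 by simp
  next
    case False
    then have "\<bar>2*e - m\<bar> + m = 2*m - 2*e" by simp
    moreover have "(2*m - 2*e) div (2*m) = 0" using False assms by (intro div_pos_pos_trivial) auto
    moreover have "(2*e) div (2*m) = 0" using False assms by (intro div_pos_pos_trivial) auto
    ultimately show ?thesis using 1 by simp
  qed
qed

definition col0 :: "int \<Rightarrow> int \<Rightarrow> bool" where
  "col0 d b = (even b \<noteq> even ((\<bar>2*b - d\<bar> + \<bar>d\<bar>) div (2*\<bar>d\<bar>)))"

lemma col0_d: "odd d \<Longrightarrow> col0 d (d - b) \<noteq> col0 d b"
proof -
  assume o: "odd d"
  have "\<bar>2*(d-b) - d\<bar> = \<bar>2*b - d\<bar>" by simp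
  moreover have "even (d - b) \<noteq> even b" using o by auto
  ultimately show ?thesis unfolding col0_def by auto
qed

lemma col0_neg: assumes "odd d" "e > 0" shows "col0 d (-e) \<noteq> col0 d e"
proof (cases "d > 0")
  case True
  have a: "\<bar>2*(-e) - d\<bar> + \<bar>d\<bar> = 2*e+2*d" using True assms by simp
  have b: "\<bar>2*e - d\<bar> + \<bar>d\<bar> = \<bar>2*e - d\<bar> + d" using True by simp
  show ?thesis using par_lemma[OF True assms(2)] unfolding col0_def a b using True by simp
next
  case False
  then have dn: "d < 0" using assms(1) by (cases "d = 0") auto
  define m where "m = -d"
  have m: "m > 0" using dn m_def by simp
  have a: "\<bar>2*e - d\<bar> + \<bar>d\<bar> = 2*e+2*m" using dn assms m_def by simp
  have b: "\<bar>2*(-e) - d\<bar> + \<bar>d\<bar> = \<bar>2*e - m\<bar> + m" using dn m_def by simp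
  have c: "2*\<bar>d\<bar> = 2*m" using dn m_def by simp
  show ?thesis using par_lemma[OF m assms(2)] unfolding col0_def a b c by simp
qed

lemma key_avoid:
  assumes o: "odd d" and x: "x \<in> bicyclic" and y: "y \<in> bicyclic" and ne: "x \<noteq> y"
    and u: "bmult x y \<in> {(0, 0)} \<union> {(e, f). (e, f) \<in> bicyclic \<and> f = d}"
  shows "col0 d (snd x) \<noteq> col0 d (snd y)"
proof -
  obtain a b where xa: "x = (a,b)" by force
  obtain c e where ya: "y = (c,e)" by force
  have bm: "bmult x y = (max (c+e) a - e, b + e)" using xa ya bmult_simp by simp
  show ?thesis
  proof (cases "b + e = d")
    case True
    then have "e = d - b" by simp
    then show ?thesis using col0_d[OF o, of b] xa ya by simp
  next
    case False
    then have "max (c+e) a - e = 0" "b + e = 0" using u bm by auto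
    moreover have "a \<ge> 0" "a + b \<ge> 0" "c \<ge> 0" "c + e \<ge> 0" using x y xa ya by (auto simp: bicyclic_def)
    ultimately have "c = 0" "a = e" "b = -e" by (auto simp: max_def split: if_splits)
    then have "e \<noteq> 0" using ne xa ya by auto
    then have "e > 0" using \<open>c + e \<ge> 0\<close> \<open>c = 0\<close> by simp
    then show ?thesis using col0_neg[OF o] xa ya \<open>b = -e\<close> by (metis snd_conv)
  qed
qed

lemma avoid_U: "odd d \<Longrightarrow> avoidable ({(0, 0)} \<union> {(e, f). (e, f) \<in> bicyclic \<and> f = d})"
  unfolding avoidable_def
  apply (intro conjI)
   apply (auto simp: bicyclic_def)[1]
  apply (rule exI[of _ "{x\<in>bicyclic. col0 d (snd x)}"])
  apply (rule exI[of _ "{x\<in>bicyclic. \<not> col0 d (snd x)}"])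
  apply (intro conjI)
     apply blast
    apply blast
  subgoal by (metis (mono_tags, lifting) key_avoid mem_Collect_eq)
  subgoal by (metis (mono_tags, lifting) key_avoid mem_Collect_eq)
  done

lemma chain_step:
  fixes col :: "int \<Rightarrow> bool"
  assumes P1: "\<And>b. b \<noteq> 0 \<Longrightarrow> col b \<noteq> col (-b)" and P2: "\<And>b. col (d-b) \<noteq> col b"
    and "b \<noteq> 0"
  shows "col (b + d) = col b"
proof -
  have "col (d - (-b)) \<noteq> col (-b)" by (rule P2)
  then show ?thesis using P1[OF assms(3)] by (simp add: add.commute)
qed

lemma chain_shift:
  fixes col :: "int \<Rightarrow> bool"
  assumes P1: "\<And>b. b \<noteq> 0 \<Longrightarrow> col b \<noteq> col (-b)" and P2: "\<And>b. col (d-b) \<noteq> col b"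
    and nd: "\<not> d dvd b"
  shows "col (b + k*d) = col b"
proof (induction k rule: int_induct[where k=0])
  case base then show ?case by simp
next
  case (step1 i)
  have "b + i*d \<noteq> 0" using nd by (metis add.commute add_diff_cancel_left' diff_0 dvd_minus_iff dvd_triv_right)
  then have "col (b + i*d + d) = col (b + i*d)" using P2[of "-(b + i*d)"] P1[of "b + i*d"] by (auto simp: algebra_simps)
  then show ?case using step1 by (simp add: algebra_simps)
next
  case (step2 i)
  have "b + (i-1)*d \<noteq> 0" using nd by (metis add.commute add_diff_cancel_left' diff_0 dvd_minus_iff dvd_triv_right)
  then have "col (b + (i-1)*d + d) = col (b + (i-1)*d)" using P2[of "-(b + (i-1)*d)"] P1[of "b + (i-1)*d"] by (auto simp: algebra_simps)
  then show ?case using step2 by (simp add: algebra_simps)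
qed

lemma chain_pos:
  fixes col :: "int \<Rightarrow> bool"
  assumes P1: "\<And>b. b \<noteq> 0 \<Longrightarrow> col b \<noteq> col (-b)" and P2: "\<And>b. col (d-b) \<noteq> col b"
    and d: "d \<noteq> 0" and k: "k \<ge> 1"
  shows "col (k*d) = col d"
  using k
proof (induction k rule: int_ge_induct)
  case base then show ?case by simp
next
  case (step i)
  have "i*d \<noteq> 0" using d step by simp
  then have "col (i*d + d) = col (i*d)" using P2[of "-(i*d)"] P1[of "i*d"] by (auto simp: algebra_simps)
  then show ?case using step by (simp add: algebra_simps)
qed

lemma chain_nonpos:
  fixes col :: "int \<Rightarrow> bool"
  assumes P1: "\<And>b. b \<noteq> 0 \<Longrightarrow> col b \<noteq> col (-b)" and P2: "\<And>b. col (d-b) \<noteq> col b"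
    and d: "d \<noteq> 0" and k: "k \<le> 0"
  shows "col (k*d) = col 0"
  using k
proof (induction k rule: int_le_induct)
  case base then show ?case by simp
next
  case (step i)
  have "(i-1)*d \<noteq> 0" using d step by simp
  then have "col ((i-1)*d + d) = col ((i-1)*d)" using P2[of "-((i-1)*d)"] P1[of "(i-1)*d"] by (auto simp: algebra_simps)
  then show ?case using step by (simp add: algebra_simps)
qed

lemma factor:
  assumes "p \<ge> 0" "p + q \<ge> 0" "s \<ge> -p"
  shows "(p+s, q-s) \<in> bicyclic" "(max 0 (-s), s) \<in> bicyclic"
    "bmult (p+s, q-s) (max 0 (-s), s) = (p, q)"
  using assms by (auto simp: bicyclic_def bmult_def max_def)

lemma not_maximal_extra:
  assumes o: "odd d"
    and V: "avoidable V" and UV: "{(0, 0)} \<union> {(e, f). (e, f) \<in> bicyclic \<and> f = d} \<subseteq> V"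
    and zV: "(p,q) \<in> V" and qd: "q \<noteq> d" and z0: "(p,q) \<noteq> (0,0)"
  shows False
proof -
  have d0: "d \<noteq> 0" using o by auto
  have "(p,q) \<in> bicyclic" using V zV unfolding avoidable_def by auto
  then have p0: "p \<ge> 0" and pq: "p + q \<ge> 0" by (auto simp: bicyclic_def)
  obtain A B where AB: "A \<union> B = bicyclic" "A \<inter> B = {}"
    and hA: "\<forall>x\<in>A. \<forall>y\<in>A. x \<noteq> y \<longrightarrow> bmult x y \<notin> V"
    and hB: "\<forall>x\<in>B. \<forall>y\<in>B. x \<noteq> y \<longrightarrow> bmult x y \<notin> V"
    using V unfolding avoidable_def by blast
  have sep: "(x \<in> A) \<noteq> (y \<in> A)" if "x \<in> bicyclic" "y \<in> bicyclic" "x \<noteq> y" "bmult x y \<in> V" for x y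
    using that AB hA hB by blast
  define rep :: "int \<Rightarrow> int \<times> int" where "rep b = (max 0 (-b), b)" for b
  have rep_in: "rep b \<in> bicyclic" for b by (auto simp: rep_def bicyclic_def)
  define col where "col b = (rep b \<in> A)" for b
  have inU: "bmult x y \<in> V" if "x \<in> bicyclic" "y \<in> bicyclic" "snd x + snd y = d" for x y
  proof -
    have "bmult x y \<in> bicyclic" using bmult_closed that by blast
    moreover have "snd (bmult x y) = d" using that by (cases x; cases y) (auto simp: bmult_def)
    ultimately show ?thesis using UV by (cases "bmult x y") auto
  qed
  have R: "((a,b) \<in> A) = col b" if "(a,b) \<in> bicyclic" for a b
  proof -
    have "snd (a,b) + snd (rep (d-b)) = d" by (simp add: rep_def)
    moreover have "(a,b) \<noteq> rep (d-b)" using o by (auto simp: rep_def)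
    ultimately have 1: "((a,b) \<in> A) \<noteq> (rep (d-b) \<in> A)" using sep inU that rep_in by blast
    have "snd (rep b) + snd (rep (d-b)) = d" by (simp add: rep_def)
    moreover have "rep b \<noteq> rep (d-b)" using o by (auto simp: rep_def)
    ultimately have 2: "(rep b \<in> A) \<noteq> (rep (d-b) \<in> A)" using sep inU rep_in by blast
    show ?thesis using 1 2 col_def by blast
  qed
  have P2: "col (d-b) \<noteq> col b" for b
  proof -
    have "snd (rep b) + snd (rep (d-b)) = d" by (simp add: rep_def)
    moreover have "rep b \<noteq> rep (d-b)" using o by (auto simp: rep_def)
    ultimately show ?thesis using sep inU rep_in col_def by metis
  qed
  have P1pos: "col n \<noteq> col (-n)" if "n > 0" for n
  proof -
    have "bmult (rep (-n)) (rep n) = (0,0)" using that by (simp add: rep_def bmult_def)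
    moreover have "rep (-n) \<noteq> rep n" using that by (simp add: rep_def)
    ultimately show ?thesis using sep[of "rep (-n)" "rep n"] rep_in UV col_def by auto
  qed
  have P1: "col b \<noteq> col (-b)" if "b \<noteq> 0" for b
  proof (cases "b > 0")
    case True then show ?thesis using P1pos by blast
  next
    case False then have "-b > 0" using that by simp
    then show ?thesis using P1pos[of "-b"] by auto
  qed
  have final: False if "x \<in> bicyclic" "y \<in> bicyclic" "x \<noteq> y" "bmult x y = (p,q)" "col (snd x) = col (snd y)" for x y
  proof -
    have "(x \<in> A) \<noteq> (y \<in> A)" using sep that zV by auto
    moreover have "(x \<in> A) = col (snd x)" "(y \<in> A) = col (snd y)" using R that by (metis prod.collapse)+
    ultimately show False using that by simp
  qed
  show False
  proof (cases "d dvd q")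
    case True
    then obtain k where qk: "q = k*d" by (metis dvd_def mult.commute)
    have k1: "k \<noteq> 1" using qd qk by auto
    show False
    proof (cases "k \<le> 0")
      case True
      have "col q = col 0" using chain_nonpos[of col d k, OF P1 P2 d0 True] qk by simp
      moreover have "bmult (p,q) (0,0) = (p,q)" using p0 by (simp add: bmult_def)
      moreover have "(0,0) \<in> bicyclic" by (simp add: bicyclic_def)
      ultimately show False using final[of "(p,q)" "(0,0)"] \<open>(p,q) \<in> bicyclic\<close> z0 by auto
    next
      case False
      then have k2: "k \<ge> 2" using k1 by simp
      have pd: "p + d \<ge> 0"
      proof (cases "d > 0")
        case True then show ?thesis using p0 by simp
      next
        case False
        have "(k-1)*d \<le> 0" using False k2 by (simp add: mult_nonneg_nonpos)
        then show ?thesis using pq qk by (simp add: algebra_simps)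
      qed
      have cq: "col (q - d) = col d" using chain_pos[of col d "k-1", OF P1 P2 d0] k2 qk by (simp add: algebra_simps)
      have F: "(p+d, q-d) \<in> bicyclic" "(max 0 (-d), d) \<in> bicyclic" "bmult (p+d, q-d) (max 0 (-d), d) = (p, q)"
        using factor[OF p0 pq, of d] pd by auto
      show False
      proof (cases "(p+d, q-d) = (max 0 (-d), d)")
        case False
        then show False using final[OF F(1) F(2) False F(3)] cq by simp
      next
        case True
        then have e1: "p + d = max 0 (-d)" and e2: "q = 2*d" by auto
        have "(p, d) \<in> bicyclic" using p0 pd by (simp add: bicyclic_def)
        moreover have "bmult (max 0 (-d), d) (p, d) = (p, q)" using e1 e2 by (auto simp: bmult_def max_def)
        moreover have "(max 0 (-d), d) \<noteq> (p, d)" using e1 d0 by auto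
        ultimately show False using final[of "(max 0 (-d), d)" "(p,d)"] F(2) by simp
      qed
    qed
  next
    case False
    define h where "h = (d+1) div 2"
    obtain j where dj: "d = 2*j+1" using o by (metis oddE)
    have h2: "2*h = d+1" unfolding h_def dj by simp
    define N where "N = \<bar>q\<bar>*\<bar>h\<bar> + p + \<bar>q\<bar> + 1"
    define s where "s = q*h + d*d*N"
    define k where "k = -(q + 2*d*N)"
    have Npos: "N > \<bar>q\<bar>" using p0 unfolding N_def by (simp add: add_nonneg_nonneg)
    have qs: "q - s = s + k*d"
    proof -
      have "2*(q*h) = q*(d+1)" using h2 by (metis mult.left_commute mult.commute)
      then show ?thesis unfolding s_def k_def by (simp add: algebra_simps)
    qed
    have dd: "d*d \<ge> 1" using d0 by (smt (verit) mult_le_cancel_left1 zero_less_mult_iff)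
    have "d*d*N \<ge> N" using dd Npos by (smt (verit) mult_le_cancel_right1)
    moreover have "q*h \<ge> -(\<bar>q\<bar>*\<bar>h\<bar>)" by (metis abs_ge_minus_self abs_mult minus_le_iff)
    ultimately have sp: "s \<ge> -p" unfolding s_def N_def using p0 by linarith
    have "\<bar>d\<bar> * N \<ge> 1 * N" using d0 Npos by (intro mult_right_mono) auto
    then have "\<bar>2*d*N\<bar> \<ge> 2*N" using Npos by (simp add: abs_mult)
    then have k0: "k \<noteq> 0" unfolding k_def using Npos by linarith
    have nds: "\<not> d dvd s"
    proof
      assume "d dvd s"
      then have "d dvd (2*s + k*d)" by simp
      moreover have "2*s + k*d = q" using qs by simp
      ultimately show False using False by simp
    qed
    have cs: "col (q - s) = col s" using chain_shift[of col d s k, OF P1 P2 nds] qs by simp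
    have F: "(p+s, q-s) \<in> bicyclic" "(max 0 (-s), s) \<in> bicyclic" "bmult (p+s, q-s) (max 0 (-s), s) = (p, q)"
      using factor[OF p0 pq sp] by auto
    have "(p+s, q-s) \<noteq> (max 0 (-s), s)" using qs k0 d0 by auto
    then show False using final[OF F(1) F(2) _ F(3)] cs by simp
  qed
qed

theorem proposition6p3:
  fixes d :: int
  assumes "odd d"
  shows "maximal_avoidable ({(0, 0)} \<union> {(e, f). (e, f) \<in> bicyclic \<and> f = d})"
  unfolding maximal_avoidable_def
proof (intro conjI allI impI)
  show "avoidable ({(0, 0)} \<union> {(e, f). (e, f) \<in> bicyclic \<and> f = d})" using avoid_U[OF assms] .
next
  fix V assume H: "avoidable V \<and> {(0, 0)} \<union> {(e, f). (e, f) \<in> bicyclic \<and> f = d} \<subseteq> V"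
  show "V = {(0, 0)} \<union> {(e, f). (e, f) \<in> bicyclic \<and> f = d}"
  proof
    show "V \<subseteq> {(0, 0)} \<union> {(e, f). (e, f) \<in> bicyclic \<and> f = d}"
    proof
      fix z assume zV: "z \<in> V"
      obtain p q where z: "z = (p,q)" by force
      have zb: "z \<in> bicyclic" using H zV unfolding avoidable_def by auto
      show "z \<in> {(0, 0)} \<union> {(e, f). (e, f) \<in> bicyclic \<and> f = d}"
      proof (rule ccontr)
        assume nz: "z \<notin> {(0, 0)} \<union> {(e, f). (e, f) \<in> bicyclic \<and> f = d}"
        then have "q \<noteq> d" "(p,q) \<noteq> (0,0)" using z zb by auto
        then show False using not_maximal_extra[OF assms] H zV z by blast
      qed
    qed
  qed (use H in blast)
qed

end
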